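(* Let $\mathcal{R},\mathcal{R}',\mathcal{C},\mathcal{C}'$ be partitions of $\{1,\ldots,n\}$ such that $\mathcal{R}'$ is finer than $\mathcal{R}$ and $\mathcal{C}'$ is finer than $\mathcal{C}$. Then $U^{\mathcal{R}\times\mathcal{C}'}$ and $U^{\mathcal{R}'\times\mathcal{C}}$ intersect orthogonally in $\mathbb{R}^{S_n}$ (with the standard inner product), and \[ U^{\mathcal{R}\times\mathcal{C}'}\cap U^{\mathcal{R}'\times\mathcal{C}}=U^{\mathcal{R}\times\mathcal{C}}. \]
   Context: $S_n$ is the group of permutations of $\{1,\ldots,n\}$. A partition $\mathcal{Z}=(Z_1,\ldots,Z_s)$ is finer than $\mathcal{W}=(W_1,\ldots,W_t)$ if every $Z_i$ is contained in some $W_j$. For partitions $\mathcal{R}=(R_i)$, $\mathcal{C}=(C_j)$ of $\{1,\ldots,n\}$, the product partition of the $n\times n$ board is $\mathcal{R}\times\mathcal{C}=(R_i\times C_j)$, and for $\pi\in S_n$ its marginal is the matrix $|\pi_{\mathcal{R}\times\mathcal{C}}|=(t_{ij})$ with $t_{ij}=|\{s:(s,\pi(s))\in R_i\times C_j\}|$. $U^{\mathcal{B}}=\{v\in\mathbb{R}^{S_n}: |\pi_{\mathcal{B}}|=|\sigma_{\mathcal{B}}|\Rightarrow v(\pi)=v(\sigma)\}$. Subspaces $U,V$ intersect orthogonally if the orthogonal projection of $U$ onto $V$ equals $U\cap V$ (equivalently, the orthogonal projections onto $U$ and $V$ commute). *)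

theory Defs
  imports Complex_Main "HOL-Library.Disjoint_Sets" "HOL-Combinatorics.Permutations"
begin

definition Sn :: "nat \<Rightarrow> (nat \<Rightarrow> nat) set" where
  "Sn n = {p. p permutes {1..n}}"

definition finer :: "'a set set \<Rightarrow> 'a set set \<Rightarrow> bool" where
  "finer Z W \<longleftrightarrow> (\<forall>Zi\<in>Z. \<exists>Wj\<in>W. Zi \<subseteq> Wj)"

definition prod_part :: "nat set set \<Rightarrow> nat set set \<Rightarrow> (nat \<times> nat) set set" where
  "prod_part R C = {A \<times> B | A B. A \<in> R \<and> B \<in> C}"

definition marginal :: "nat \<Rightarrow> (nat \<times> nat) set set \<Rightarrow> (nat \<Rightarrow> nat) \<Rightarrow> (nat \<times> nat) set \<Rightarrow> nat" where
  "marginal n B p = (\<lambda>X. if X \<in> B then card {s \<in> {1..n}. (s, p s) \<in> X} else 0)"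

definition RSn :: "nat \<Rightarrow> ((nat \<Rightarrow> nat) \<Rightarrow> real) set" where
  "RSn n = {v. \<forall>p. p \<notin> Sn n \<longrightarrow> v p = 0}"

definition U :: "nat \<Rightarrow> (nat \<times> nat) set set \<Rightarrow> ((nat \<Rightarrow> nat) \<Rightarrow> real) set" where
  "U n B = {v \<in> RSn n. \<forall>p\<in>Sn n. \<forall>q\<in>Sn n. marginal n B p = marginal n B q \<longrightarrow> v p = v q}"

definition ip :: "nat \<Rightarrow> ((nat \<Rightarrow> nat) \<Rightarrow> real) \<Rightarrow> ((nat \<Rightarrow> nat) \<Rightarrow> real) \<Rightarrow> real" where
  "ip n v w = (\<Sum>p\<in>Sn n. v p * w p)"

definition proj :: "nat \<Rightarrow> ((nat \<Rightarrow> nat) \<Rightarrow> real) set \<Rightarrow> ((nat \<Rightarrow> nat) \<Rightarrow> real) \<Rightarrow> ((nat \<Rightarrow> nat) \<Rightarrow> real)" where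
  "proj n V u = (THE w. w \<in> V \<and> (\<forall>x\<in>V. ip n (u - w) x = 0))"

definition intersect_orth :: "nat \<Rightarrow> ((nat \<Rightarrow> nat) \<Rightarrow> real) set \<Rightarrow> ((nat \<Rightarrow> nat) \<Rightarrow> real) set \<Rightarrow> bool" where
  "intersect_orth n U' V \<longleftrightarrow> proj n V ` U' = U' \<inter> V"

end

theory Submission
  imports Defs
begin

definition Hg :: "nat \<Rightarrow> nat set set \<Rightarrow> (nat \<Rightarrow> nat) set" where
  "Hg n C = {a. a permutes {1..n} \<and> (\<forall>B\<in>C. \<forall>y\<in>B. a y \<in> B)}"

lemma part_uniq:
  assumes "partition_on S P" "A \<in> P" "B \<in> P" "x \<in> A" "x \<in> B" shows "A = B"
  using assms unfolding partition_on_def disjoint_def by blast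

lemma part_ex:
  assumes "partition_on S P" "x \<in> S" obtains A where "A \<in> P" "x \<in> A"
  using assms unfolding partition_on_def by blast

lemma part_sub:
  assumes "partition_on S P" "A \<in> P" shows "A \<subseteq> S"
  using assms unfolding partition_on_def by blast

lemma Hg_iff:
  assumes "partition_on {1..n} C" "a \<in> Hg n C" "B \<in> C"
  shows "a y \<in> B \<longleftrightarrow> y \<in> B"
proof
  assume "y \<in> B" thus "a y \<in> B" using assms unfolding Hg_def by blast
next
  assume ay: "a y \<in> B"
  have perm: "a permutes {1..n}" using assms unfolding Hg_def by blast
  show "y \<in> B"
  proof (cases "y \<in> {1..n}")
    case True
    then obtain B2 where "B2 \<in> C" "y \<in> B2" using part_ex[OF assms(1)] by blast
    then have "a y \<in> B2" using assms unfolding Hg_def by blast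
    then have "B2 = B" using part_uniq[OF assms(1)] \<open>B2 \<in> C\<close> assms(3) ay by blast
    thus ?thesis using \<open>y \<in> B2\<close> by simp
  next
    case False
    then show ?thesis using ay permutes_not_in[OF perm False] by simp
  qed
qed

lemma Hg_id: "id \<in> Hg n C"
  unfolding Hg_def by (simp add: permutes_id)

lemma Hg_comp: "a \<in> Hg n C \<Longrightarrow> b \<in> Hg n C \<Longrightarrow> a \<circ> b \<in> Hg n C"
  unfolding Hg_def by (auto intro: permutes_compose)

lemma Hg_inv:
  assumes "partition_on {1..n} C" "a \<in> Hg n C" shows "inv a \<in> Hg n C"
proof -
  have perm: "a permutes {1..n}" using assms unfolding Hg_def by blast
  have "inv a y \<in> B" if "B \<in> C" "y \<in> B" for B y
    using Hg_iff[OF assms that(1), of "inv a y"] permutes_inverses(1)[OF perm] that by simp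
  thus ?thesis using permutes_inv[OF perm] unfolding Hg_def by blast
qed

lemma Hg_finer:
  assumes "partition_on {1..n} C" "partition_on {1..n} C'" "finer C' C"
  shows "Hg n C' \<subseteq> Hg n C"
proof
  fix a assume a: "a \<in> Hg n C'"
  have "a y \<in> B" if "B \<in> C" "y \<in> B" for B y
  proof -
    have "y \<in> {1..n}" using part_sub[OF assms(1) that(1)] that(2) by blast
    then obtain B' where B': "B' \<in> C'" "y \<in> B'" using part_ex[OF assms(2)] by blast
    then obtain B'' where "B'' \<in> C" "B' \<subseteq> B''" using assms(3) unfolding finer_def by blast
    then have "B'' = B" using part_uniq[OF assms(1) _ that(1)] B' that by blast
    then show ?thesis using a B' \<open>B' \<subseteq> B''\<close> unfolding Hg_def by blast
  qed
  thus "a \<in> Hg n C" using a unfolding Hg_def by blast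
qed

lemma Sn_comp: "p \<in> Sn n \<Longrightarrow> q \<in> Sn n \<Longrightarrow> p \<circ> q \<in> Sn n"
  unfolding Sn_def by (auto intro: permutes_compose)

lemma Hg_Sn: "a \<in> Hg n C \<Longrightarrow> a \<in> Sn n"
  unfolding Hg_def Sn_def by blast

lemma finite_Sn: "finite (Sn n)"
  unfolding Sn_def by (rule finite_permutations) simp

lemma card_perm_pre:
  assumes "b permutes S"
  shows "card {s\<in>S. P (b s)} = card {t\<in>S. P t}"
proof -
  have "b ` {s\<in>S. P (b s)} = {t\<in>S. P t}"
  proof
    show "b ` {s\<in>S. P (b s)} \<subseteq> {t\<in>S. P t}" using permutes_in_image[OF assms] by auto
    show "{t\<in>S. P t} \<subseteq> b ` {s\<in>S. P (b s)}"
    proof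
      fix t assume t: "t \<in> {t\<in>S. P t}"
      have "inv b t \<in> S" using permutes_in_image[OF permutes_inv[OF assms]] t by auto
      moreover have "b (inv b t) = t" using permutes_inverses(1)[OF assms] .
      ultimately show "t \<in> b ` {s\<in>S. P (b s)}" using t by (metis (mono_tags, lifting) image_eqI mem_Collect_eq)
    qed
  qed
  moreover have "inj_on b {s\<in>S. P (b s)}" using permutes_inj_on[OF assms] .
  ultimately show ?thesis by (metis card_image)
qed

lemma char_if:
  assumes R: "partition_on {1..n} R" and C: "partition_on {1..n} C"
    and a: "a \<in> Hg n C" and b: "b \<in> Hg n R"
  shows "marginal n (prod_part R C) (a \<circ> p \<circ> b) = marginal n (prod_part R C) p"
proof
  fix X
  show "marginal n (prod_part R C) (a \<circ> p \<circ> b) X = marginal n (prod_part R C) p X"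
  proof (cases "X \<in> prod_part R C")
    case True
    then obtain A B where X: "X = A \<times> B" "A \<in> R" "B \<in> C" unfolding prod_part_def by blast
    have bp: "b permutes {1..n}" using b unfolding Hg_def by blast
    have "{s \<in> {1..n}. (s, (a \<circ> p \<circ> b) s) \<in> X} = {s \<in> {1..n}. (\<lambda>t. t \<in> A \<and> p t \<in> B) (b s)}"
      using Hg_iff[OF C a X(3)] Hg_iff[OF R b X(2)] X(1) by auto
    also have "card \<dots> = card {t \<in> {1..n}. t \<in> A \<and> p t \<in> B}"
      by (rule card_perm_pre[OF bp])
    finally show ?thesis unfolding marginal_def using True X(1) by simp
  next
    case False then show ?thesis unfolding marginal_def by simp
  qed
qed


definition Sfib :: "nat \<Rightarrow> (nat \<Rightarrow> nat) \<Rightarrow> (nat \<times> nat) set \<Rightarrow> nat set" where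
  "Sfib n p X = {s \<in> {1..n}. (s, p s) \<in> X}"

lemma blk_ex1:
  assumes R: "partition_on {1..n} R" and C: "partition_on {1..n} C" and p: "p \<in> Sn n"
    and s: "s \<in> {1..n}"
  shows "\<exists>!X. X \<in> prod_part R C \<and> s \<in> Sfib n p X"
proof -
  have ps: "p s \<in> {1..n}" using permutes_in_image[of p "{1..n}" s] p s unfolding Sn_def by simp
  obtain A where A: "A \<in> R" "s \<in> A" using part_ex[OF R s] by blast
  obtain B where B: "B \<in> C" "p s \<in> B" using part_ex[OF C ps] by blast
  show ?thesis
  proof (rule ex1I[of _ "A \<times> B"])
    show "A \<times> B \<in> prod_part R C \<and> s \<in> Sfib n p (A \<times> B)"
      using A B s unfolding prod_part_def Sfib_def by blast
  next
    fix Y assume Y: "Y \<in> prod_part R C \<and> s \<in> Sfib n p Y"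
    then obtain A' B' where "Y = A' \<times> B'" "A' \<in> R" "B' \<in> C" unfolding prod_part_def by blast
    moreover have "s \<in> A'" "p s \<in> B'" using Y calculation(1) unfolding Sfib_def by auto
    moreover have "A' = A" using part_uniq[OF R _ A(1)] A calculation by blast
    moreover have "B' = B" using part_uniq[OF C _ B(1)] B calculation by blast
    ultimately show "Y = A \<times> B" by simp
  qed
qed

lemma blk_uniq:
  assumes R: "partition_on {1..n} R" and C: "partition_on {1..n} C"
    and X: "X \<in> prod_part R C" and Y: "Y \<in> prod_part R C"
    and sX: "s \<in> Sfib n p X" and sY: "s \<in> Sfib n p Y"
  shows "X = Y"
proof -
  obtain A B where XA: "X = A \<times> B" "A \<in> R" "B \<in> C" using X unfolding prod_part_def by blast
  obtain A' B' where YA: "Y = A' \<times> B'" "A' \<in> R" "B' \<in> C" using Y unfolding prod_part_def by blast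
  have "s \<in> A" "p s \<in> B" using sX XA unfolding Sfib_def by auto
  moreover have "s \<in> A'" "p s \<in> B'" using sY YA unfolding Sfib_def by auto
  ultimately have "A = A'" "B = B'" using part_uniq[OF R XA(2) YA(2)] part_uniq[OF C XA(3) YA(3)] by auto
  then show ?thesis using XA YA by simp
qed

lemma char_onlyif:
  assumes R: "partition_on {1..n} R" and C: "partition_on {1..n} C"
    and p: "p \<in> Sn n" and q: "q \<in> Sn n"
    and m: "marginal n (prod_part R C) q = marginal n (prod_part R C) p"
  shows "\<exists>a\<in>Hg n C. \<exists>b\<in>Hg n R. q = a \<circ> p \<circ> b"
proof -
  let ?P = "prod_part R C"
  have pp: "p permutes {1..n}" and qp: "q permutes {1..n}" using p q unfolding Sn_def by auto
  have cardeq: "card (Sfib n q X) = card (Sfib n p X)" if "X \<in> ?P" for X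
    using fun_cong[OF m, of X] that unfolding marginal_def Sfib_def by simp
  have "\<forall>X\<in>?P. \<exists>f. bij_betw f (Sfib n q X) (Sfib n p X)"
    using cardeq by (intro ballI finite_same_card_bij) (auto simp: Sfib_def)
  then have "\<exists>f. \<forall>X\<in>?P. bij_betw (f X) (Sfib n q X) (Sfib n p X)" by (rule bchoice)
  then obtain f where f0: "\<forall>X\<in>?P. bij_betw (f X) (Sfib n q X) (Sfib n p X)" by blast
  have f: "bij_betw (f X) (Sfib n q X) (Sfib n p X)" if "X \<in> ?P" for X using f0 that by blast
  define K where "K s = (THE X. X \<in> ?P \<and> s \<in> Sfib n q X)" for s
  have K: "K s \<in> ?P \<and> s \<in> Sfib n q (K s)" if "s \<in> {1..n}" for s
    unfolding K_def using theI'[OF blk_ex1[OF R C q that]] .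
  define b where "b s = (if s \<in> {1..n} then f (K s) s else s)" for s
  have bS: "b s \<in> Sfib n p (K s)" if "s \<in> {1..n}" for s
  proof -
    have "f (K s) ` Sfib n q (K s) = Sfib n p (K s)" using f[OF conjunct1[OF K[OF that]]] unfolding bij_betw_def by blast
    then show ?thesis using K[OF that] that unfolding b_def by auto
  qed
  have b_in: "b s \<in> {1..n}" if "s \<in> {1..n}" for s using bS[OF that] unfolding Sfib_def by auto
  have inj: "inj_on b {1..n}"
  proof
    fix s t assume s: "s \<in> {1..n}" and t: "t \<in> {1..n}" and e: "b s = b t"
    have Kst: "K s = K t"
      using blk_uniq[OF R C conjunct1[OF K[OF s]] conjunct1[OF K[OF t]] bS[OF s]] bS[OF t] e by simp
    have "inj_on (f (K s)) (Sfib n q (K s))" using f[OF conjunct1[OF K[OF s]]] unfolding bij_betw_def by blast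
    moreover have "s \<in> Sfib n q (K s)" "t \<in> Sfib n q (K s)" using K[OF s] K[OF t] Kst by auto
    moreover have "f (K s) s = f (K s) t" using e s t Kst unfolding b_def by simp
    ultimately show "s = t" unfolding inj_on_def by blast
  qed
  have "b ` {1..n} \<subseteq> {1..n}" using b_in by auto
  then have "b ` {1..n} = {1..n}" using inj by (simp add: endo_inj_surj)
  then have bperm: "b permutes {1..n}"
    using inj by (intro bij_imp_permutes) (auto simp: bij_betw_def b_def)
  have bH: "b \<in> Hg n R"
  proof -
    have "b s \<in> A" if "A \<in> R" "s \<in> A" for A s
    proof -
      have s: "s \<in> {1..n}" using part_sub[OF R that(1)] that(2) by blast
      obtain A' B' where KA: "K s = A' \<times> B'" "A' \<in> R" "B' \<in> C" using K[OF s] unfolding prod_part_def by blast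
      have "s \<in> A'" using K[OF s] KA unfolding Sfib_def by auto
      then have "A' = A" using part_uniq[OF R KA(2) that(1)] that by blast
      then show ?thesis using bS[OF s] KA unfolding Sfib_def by auto
    qed
    thus ?thesis using bperm unfolding Hg_def by blast
  qed
  define g where "g = p \<circ> b"
  have gp: "g permutes {1..n}" unfolding g_def using bperm pp by (rule permutes_compose)
  define a where "a = q \<circ> inv g"
  have ap: "a permutes {1..n}" unfolding a_def using permutes_inv[OF gp] qp by (rule permutes_compose)
  have aH: "a \<in> Hg n C"
  proof -
    have "a y \<in> B" if "B \<in> C" "y \<in> B" for B y
    proof -
      have y: "y \<in> {1..n}" using part_sub[OF C that(1)] that(2) by blast
      define s where "s = inv g y"
      have s: "s \<in> {1..n}" unfolding s_def using permutes_in_image[OF permutes_inv[OF gp]] y by blast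
      have gs: "p (b s) = y" unfolding s_def using permutes_inverses(1)[OF gp] by (simp add: g_def)
      obtain A' B' where KA: "K s = A' \<times> B'" "A' \<in> R" "B' \<in> C" using K[OF s] unfolding prod_part_def by blast
      have "p (b s) \<in> B'" using bS[OF s] KA unfolding Sfib_def by auto
      then have "B' = B" using part_uniq[OF C KA(3) that(1)] that gs by blast
      moreover have "q s \<in> B'" using K[OF s] KA unfolding Sfib_def by auto
      ultimately show ?thesis by (simp add: a_def s_def)
    qed
    thus ?thesis using ap unfolding Hg_def by blast
  qed
  have "a \<circ> p \<circ> b = q \<circ> (inv g \<circ> g)" unfolding a_def g_def by (simp add: o_assoc)
  also have "\<dots> = q" using permutes_inv_o(2)[OF gp] by simp
  finally have "q = a \<circ> p \<circ> b" by simp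
  then show ?thesis using aH bH by blast
qed


lemma Hg_SnP: "a \<in> Hg n C \<Longrightarrow> a permutes {1..n}" unfolding Hg_def by simp

lemma inv_char:
  assumes R: "partition_on {1..n} R" and C: "partition_on {1..n} C" and v: "v \<in> RSn n"
  shows "v \<in> U n (prod_part R C) \<longleftrightarrow> (\<forall>p\<in>Sn n. \<forall>a\<in>Hg n C. \<forall>b\<in>Hg n R. v (a \<circ> p \<circ> b) = v p)"
proof
  assume vU: "v \<in> U n (prod_part R C)"
  show "\<forall>p\<in>Sn n. \<forall>a\<in>Hg n C. \<forall>b\<in>Hg n R. v (a \<circ> p \<circ> b) = v p"
  proof (intro ballI)
    fix p a b assume p: "p \<in> Sn n" and a: "a \<in> Hg n C" and b: "b \<in> Hg n R"
    have q: "a \<circ> p \<circ> b \<in> Sn n" using Sn_comp[OF Sn_comp[OF Hg_Sn[OF a] p] Hg_Sn[OF b]] .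
    have all: "\<forall>p\<in>Sn n. \<forall>q\<in>Sn n. marginal n (prod_part R C) p = marginal n (prod_part R C) q \<longrightarrow> v p = v q"
      using vU unfolding U_def mem_Collect_eq by (rule conjunct2)
    show "v (a \<circ> p \<circ> b) = v p"
      using all[rule_format, OF q p char_if[OF R C a b, of p]] .
  qed
next
  assume H: "\<forall>p\<in>Sn n. \<forall>a\<in>Hg n C. \<forall>b\<in>Hg n R. v (a \<circ> p \<circ> b) = v p"
  have "v p = v q" if p: "p \<in> Sn n" and q: "q \<in> Sn n"
    and m: "marginal n (prod_part R C) p = marginal n (prod_part R C) q" for p q
  proof -
    obtain a b where a: "a \<in> Hg n C" and b: "b \<in> Hg n R" and qe: "q = a \<circ> p \<circ> b"
      using char_onlyif[OF R C p q m[symmetric]] by blast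
    have "v (a \<circ> p \<circ> b) = v p" using H[rule_format, OF p a b] .
    then show ?thesis using qe by simp
  qed
  then have H2: "\<forall>p\<in>Sn n. \<forall>q\<in>Sn n. marginal n (prod_part R C) p = marginal n (prod_part R C) q \<longrightarrow> v p = v q"
    by blast
  show "v \<in> U n (prod_part R C)" unfolding U_def mem_Collect_eq using v H2 by (rule conjI)
qed

lemma U_RSn: "v \<in> U n B \<Longrightarrow> v \<in> RSn n" unfolding U_def by simp

lemma U_diff:
  assumes v: "v \<in> U n B" and w: "w \<in> U n B" shows "v - w \<in> U n B"
proof -
  have "(v - w) p = 0" if "p \<notin> Sn n" for p using v w that unfolding U_def RSn_def by simp
  moreover have "(v - w) p = (v - w) q" if "p \<in> Sn n" "q \<in> Sn n" "marginal n B p = marginal n B q" for p q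
  proof -
    have "v p = v q" using v that unfolding U_def by blast
    moreover have "w p = w q" using w that unfolding U_def by blast
    ultimately show ?thesis by simp
  qed
  ultimately show ?thesis unfolding U_def RSn_def by blast
qed

lemma proj_eq:
  assumes w: "w \<in> U n B" and orth: "\<forall>x\<in>U n B. ip n (u - w) x = 0"
  shows "proj n (U n B) u = w"
  unfolding proj_def
proof (rule the_equality)
  show "w \<in> U n B \<and> (\<forall>x\<in>U n B. ip n (u - w) x = 0)" using w orth by blast
next
  fix w' assume w': "w' \<in> U n B \<and> (\<forall>x\<in>U n B. ip n (u - w') x = 0)"
  define d where "d = w - w'"
  have dU: "d \<in> U n B" unfolding d_def using U_diff w w' by blast
  have "ip n d d = ip n (u - w') d - ip n (u - w) d"
    unfolding ip_def d_def by (simp add: sum_subtractf[symmetric] algebra_simps)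
  also have "\<dots> = 0" using w' orth dU by simp
  finally have "(\<Sum>p\<in>Sn n. d p * d p) = 0" unfolding ip_def .
  then have "\<forall>p\<in>Sn n. d p * d p = 0"
    using sum_nonneg_eq_0_iff[OF finite_Sn, where f="\<lambda>p. d p * d p"] by simp
  then have z: "d p = 0" if "p \<in> Sn n" for p using that by simp
  show "w' = w"
  proof
    fix p show "w' p = w p"
    proof (cases "p \<in> Sn n")
      case True then show ?thesis using z[OF True] unfolding d_def by simp
    next
      case False
      have "w p = 0" using U_RSn[OF w] False unfolding RSn_def by blast
      moreover have "w' p = 0" using U_RSn[of w'] w' False unfolding RSn_def by blast
      ultimately show ?thesis by simp
    qed
  qed
qed

lemma sum_reindex_Hg:
  assumes C: "partition_on {1..n} C" and a0: "a0 \<in> Hg n C"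
  shows "(\<Sum>a\<in>Hg n C. f (a \<circ> a0)) = (\<Sum>a\<in>Hg n C. f a)"
proof -
  have pa: "a0 permutes {1..n}" using Hg_SnP[OF a0] .
  have "bij_betw (\<lambda>a. a \<circ> a0) (Hg n C) (Hg n C)"
  proof (rule bij_betw_byWitness[where f'="\<lambda>a. a \<circ> inv a0"])
    show "\<forall>a\<in>Hg n C. a \<circ> a0 \<circ> inv a0 = a" by (simp add: fun_eq_iff permutes_inverses[OF pa])
    show "\<forall>a\<in>Hg n C. a \<circ> inv a0 \<circ> a0 = a" by (simp add: fun_eq_iff permutes_inverses[OF pa])
    show "(\<lambda>a. a \<circ> a0) ` Hg n C \<subseteq> Hg n C" using Hg_comp a0 by blast
    show "(\<lambda>a. a \<circ> inv a0) ` Hg n C \<subseteq> Hg n C" using Hg_comp Hg_inv[OF C a0] by blast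
  qed
  then show ?thesis by (rule sum.reindex_bij_betw)
qed

lemma sum_reindex_Sn:
  assumes a0: "a0 \<in> Sn n"
  shows "(\<Sum>p\<in>Sn n. f (a0 \<circ> p)) = (\<Sum>p\<in>Sn n. f p)"
proof -
  have pa: "a0 permutes {1..n}" using a0 unfolding Sn_def by blast
  have ia: "inv a0 \<in> Sn n" using permutes_inv[OF pa] unfolding Sn_def by blast
  have "bij_betw (\<lambda>p. a0 \<circ> p) (Sn n) (Sn n)"
  proof (rule bij_betw_byWitness[where f'="\<lambda>p. inv a0 \<circ> p"])
    show "\<forall>p\<in>Sn n. inv a0 \<circ> (a0 \<circ> p) = p" by (simp add: fun_eq_iff permutes_inverses[OF pa])
    show "\<forall>p\<in>Sn n. a0 \<circ> (inv a0 \<circ> p) = p" by (simp add: fun_eq_iff permutes_inverses[OF pa])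
    show "(\<lambda>p. a0 \<circ> p) ` Sn n \<subseteq> Sn n" using Sn_comp a0 by blast
    show "(\<lambda>p. inv a0 \<circ> p) ` Sn n \<subseteq> Sn n" using Sn_comp ia by blast
  qed
  then show ?thesis by (rule sum.reindex_bij_betw)
qed


theorem lemma2:
  fixes n :: nat and R R' C C' :: "nat set set"
  assumes "partition_on {1..n} R" and "partition_on {1..n} R'"
    and "partition_on {1..n} C" and "partition_on {1..n} C'"
    and "finer R' R" and "finer C' C"
  shows "intersect_orth n (U n (prod_part R C')) (U n (prod_part R' C))
    \<and> U n (prod_part R C') \<inter> U n (prod_part R' C) = U n (prod_part R C)"
proof -
  note Rp = assms(1) and R'p = assms(2) and Cp = assms(3) and C'p = assms(4)
  have HR: "Hg n R' \<subseteq> Hg n R" by (rule Hg_finer[OF Rp R'p assms(5)])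
  have HC: "Hg n C' \<subseteq> Hg n C" by (rule Hg_finer[OF Cp C'p assms(6)])
  let ?U = "U n (prod_part R C')" and ?V = "U n (prod_part R' C)" and ?W = "U n (prod_part R C)"
  have eq: "?U \<inter> ?V = ?W"
  proof (intro equalityI subsetI)
    fix v assume vUV: "v \<in> ?U \<inter> ?V"
    then have v: "v \<in> RSn n" using U_RSn by blast
    have iu: "\<forall>p\<in>Sn n. \<forall>a\<in>Hg n C'. \<forall>b\<in>Hg n R. v (a \<circ> p \<circ> b) = v p"
      using vUV inv_char[OF Rp C'p v] by blast
    have iv: "\<forall>p\<in>Sn n. \<forall>a\<in>Hg n C. \<forall>b\<in>Hg n R'. v (a \<circ> p \<circ> b) = v p"
      using vUV inv_char[OF R'p Cp v] by blast
    have "\<forall>p\<in>Sn n. \<forall>a\<in>Hg n C. \<forall>b\<in>Hg n R. v (a \<circ> p \<circ> b) = v p"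
    proof (intro ballI)
      fix p a b assume p: "p \<in> Sn n" and a: "a \<in> Hg n C" and b: "b \<in> Hg n R"
      have pb: "p \<circ> b \<in> Sn n" using Sn_comp[OF p Hg_Sn[OF b]] .
      have "v (a \<circ> p \<circ> b) = v (a \<circ> (p \<circ> b) \<circ> id)" by (simp add: o_assoc)
      also have "\<dots> = v (p \<circ> b)" using iv[rule_format, OF pb a Hg_id] .
      also have "\<dots> = v (id \<circ> p \<circ> b)" by simp
      also have "\<dots> = v p" using iu[rule_format, OF p Hg_id b] .
      finally show "v (a \<circ> p \<circ> b) = v p" .
    qed
    then show "v \<in> ?W" using inv_char[OF Rp Cp v] by blast
  next
    fix v assume vW: "v \<in> ?W"
    then have v: "v \<in> RSn n" using U_RSn by blast
    have iw: "\<forall>p\<in>Sn n. \<forall>a\<in>Hg n C. \<forall>b\<in>Hg n R. v (a \<circ> p \<circ> b) = v p"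
      using vW inv_char[OF Rp Cp v] by blast
    have "\<forall>p\<in>Sn n. \<forall>a\<in>Hg n C'. \<forall>b\<in>Hg n R. v (a \<circ> p \<circ> b) = v p" using iw HC by blast
    then have "v \<in> ?U" using inv_char[OF Rp C'p v] by blast
    moreover have "\<forall>p\<in>Sn n. \<forall>a\<in>Hg n C. \<forall>b\<in>Hg n R'. v (a \<circ> p \<circ> b) = v p" using iw HR by blast
    then have "v \<in> ?V" using inv_char[OF R'p Cp v] by blast
    ultimately show "v \<in> ?U \<inter> ?V" by blast
  qed
  have finH: "finite (Hg n C)" using finite_subset[OF _ finite_Sn] Hg_Sn by blast
  have Npos: "card (Hg n C) > 0" using finH Hg_id[of n C] card_gt_0_iff by blast
  define N where "N = real (card (Hg n C))"
  have N0: "N \<noteq> 0" using Npos unfolding N_def by simp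
  have orth: "proj n ?V ` ?U = ?U \<inter> ?V"
  proof (intro equalityI subsetI)
    fix y assume "y \<in> proj n ?V ` ?U"
    then obtain u where uU: "u \<in> ?U" and y: "y = proj n ?V u" by blast
    have u: "u \<in> RSn n" using U_RSn[OF uU] .
    have iu: "\<forall>p\<in>Sn n. \<forall>a\<in>Hg n C'. \<forall>b\<in>Hg n R. u (a \<circ> p \<circ> b) = u p"
      using uU inv_char[OF Rp C'p u] by blast
    have ub: "u (q \<circ> b) = u q" if q: "q \<in> Sn n" and b: "b \<in> Hg n R" for q b
      using iu[rule_format, OF q Hg_id b] by simp
    define w where "w p = (if p \<in> Sn n then (\<Sum>a\<in>Hg n C. u (a \<circ> p)) / N else 0)" for p
    have wR: "w \<in> RSn n" unfolding RSn_def w_def by simp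
    have winv: "w (a0 \<circ> p \<circ> b) = w p" if p: "p \<in> Sn n" and a0: "a0 \<in> Hg n C" and b: "b \<in> Hg n R"
      for p a0 b
    proof -
      have q: "a0 \<circ> p \<circ> b \<in> Sn n" using Sn_comp[OF Sn_comp[OF Hg_Sn[OF a0] p] Hg_Sn[OF b]] .
      have "(\<Sum>a\<in>Hg n C. u (a \<circ> (a0 \<circ> p \<circ> b))) = (\<Sum>a\<in>Hg n C. u ((a \<circ> a0) \<circ> p))"
      proof (rule sum.cong)
        fix a assume a: "a \<in> Hg n C"
        have aq: "a \<circ> a0 \<circ> p \<in> Sn n" using Sn_comp[OF Sn_comp[OF Hg_Sn[OF a] Hg_Sn[OF a0]] p] .
        have "u (a \<circ> (a0 \<circ> p \<circ> b)) = u ((a \<circ> a0 \<circ> p) \<circ> b)" by (simp add: o_assoc)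
        also have "\<dots> = u (a \<circ> a0 \<circ> p)" using ub[OF aq b] .
        finally show "u (a \<circ> (a0 \<circ> p \<circ> b)) = u ((a \<circ> a0) \<circ> p)" .
      qed simp
      also have "\<dots> = (\<Sum>a\<in>Hg n C. u (a \<circ> p))"
        using sum_reindex_Hg[OF Cp a0, of "\<lambda>c. u (c \<circ> p)"] by simp
      finally show ?thesis unfolding w_def using p q by simp
    qed
    have wV: "w \<in> ?V"
      using inv_char[OF R'p Cp wR] winv HR by blast
    have wU: "w \<in> ?U"
      using inv_char[OF Rp C'p wR] winv HC by blast
    have wo: "\<forall>x\<in>?V. ip n (u - w) x = 0"
    proof
      fix x assume xV: "x \<in> ?V"
      have x: "x \<in> RSn n" using U_RSn[OF xV] .
      have ix: "\<forall>p\<in>Sn n. \<forall>a\<in>Hg n C. \<forall>b\<in>Hg n R'. x (a \<circ> p \<circ> b) = x p"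
        using xV inv_char[OF R'p Cp x] by blast
      have xa: "x (a \<circ> p) = x p" if p: "p \<in> Sn n" and a: "a \<in> Hg n C" for a p
        using ix[rule_format, OF p a Hg_id] by simp
      have "ip n w x = (\<Sum>p\<in>Sn n. (\<Sum>a\<in>Hg n C. u (a \<circ> p) * x p) / N)"
        unfolding ip_def w_def by (intro sum.cong refl) (simp add: sum_distrib_right)
      also have "\<dots> = (\<Sum>p\<in>Sn n. \<Sum>a\<in>Hg n C. u (a \<circ> p) * x p) / N"
        by (simp add: sum_divide_distrib)
      also have "(\<Sum>p\<in>Sn n. \<Sum>a\<in>Hg n C. u (a \<circ> p) * x p) = (\<Sum>a\<in>Hg n C. \<Sum>p\<in>Sn n. u (a \<circ> p) * x p)"
        by (rule sum.swap)
      also have "\<dots> = (\<Sum>a\<in>Hg n C. \<Sum>p\<in>Sn n. u (a \<circ> p) * x (a \<circ> p))"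
        using xa by (intro sum.cong refl) simp
      also have "\<dots> = (\<Sum>a\<in>Hg n C. ip n u x)"
        unfolding ip_def using sum_reindex_Sn[OF Hg_Sn, of _ n C "\<lambda>q. u q * x q"]
        by (rule sum.cong[OF refl]) simp
      also have "\<dots> = N * ip n u x" unfolding N_def by simp
      finally have "ip n w x = ip n u x" using N0 by simp
      moreover have "ip n (u - w) x = ip n u x - ip n w x"
        unfolding ip_def by (simp add: sum_subtractf[symmetric] left_diff_distrib)
      ultimately show "ip n (u - w) x = 0" by simp
    qed
    have "proj n ?V u = w" by (rule proj_eq[OF wV wo])
    then show "y \<in> ?U \<inter> ?V" using y wU wV by simp
  next
    fix y assume yUV: "y \<in> ?U \<inter> ?V"
    have "\<forall>x\<in>?V. ip n (y - y) x = 0" unfolding ip_def by simp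
    then have "proj n ?V y = y" using proj_eq yUV by blast
    then show "y \<in> proj n ?V ` ?U" using yUV by (metis IntD1 image_eqI)
  qed
  show ?thesis using eq orth unfolding intersect_orth_def by blast
qed

end
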